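(* Let $s\ge 1$ and let $2\le n_0\le n_1\le\dots\le n_s$ be integers. For $0\le i\le s-1$ let $k_i=\frac{\log n_s}{\log n_i}$, and let $x_0$ be the unique root of the equation $sx-1-\sum_{j=0}^{s-1}x^{\frac{k_j-1}{k_j}}=0$ in the interval $[1,\infty)$. Then $$\frac{s+1}{s}\le x_0<\max(k_0,e+2).$$
   Context: All logarithms are to base 2. *)

theory Defs
  imports "HOL-Analysis.Analysis"
begin

text \<open>k_i = log n_s / log n_i (base irrelevant for the ratio; base 2 as in the paper).\<close>
definition k :: "(nat \<Rightarrow> nat) \<Rightarrow> nat \<Rightarrow> nat \<Rightarrow> real" where
  "k n s i = log 2 (real (n s)) / log 2 (real (n i))"

end

theory Submission
  imports Defs
begin

lemma mono_aux:
  assumes "\<And>i. i < s \<Longrightarrow> (n::nat\<Rightarrow>nat) i \<le> n (Suc i)"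
  shows "i + d \<le> s \<Longrightarrow> n i \<le> n (i + d)"
proof (induction d)
  case 0 then show ?case by simp
next
  case (Suc d)
  then have "n i \<le> n (i + d)" by simp
  also have "\<dots> \<le> n (Suc (i + d))" using assms Suc.prems by simp
  finally show ?case by simp
qed

lemma key_ineq:
  fixes x K :: real
  assumes K: "K \<ge> 1" and xK: "x \<ge> K" and xe: "x \<ge> exp 1 + 2"
  shows "x - x powr (1 - 1/K) > 1"
proof -
  have x0: "x > 0" using K xK by linarith
  have ep: "exp 1 > (0::real)" by simp
  have x2: "x > 2" using xe ep by linarith
  have lnx: "ln x \<ge> 1 + (1 - exp 1 / x)"
  proof -
    have "ln (exp 1 / x) \<le> exp 1 / x - 1" using x0 by (intro ln_le_minus_one) simp
    then show ?thesis using x0 by (simp add: ln_div)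
  qed
  have "(x - exp 1) * (x - 1) \<ge> 2 * (x - 1)"
    using xe x2 by (intro mult_right_mono) auto
  moreover have "2 * (x - 1) > x" using x2 by (simp add: algebra_simps)
  ultimately have "(x - exp 1) * (x - 1) > x" by linarith
  then have "(x - exp 1) / x > 1 / (x - 1)" using x2 by (simp add: field_simps)
  then have "1 - exp 1 / x > 1 / (x - 1)" using x0 by (simp add: diff_divide_distrib)
  then have "ln x > 1 + 1 / (x - 1)" using lnx by linarith
  then have "(x - 1) * ln x > (x - 1) * (1 + 1 / (x - 1))" using x2 by (intro mult_strict_left_mono) auto
  moreover have "(x - 1) * (1 + 1 / (x - 1)) = x" using x2 by (simp add: field_simps)
  ultimately have A: "(x - 1) * ln x > x" by simp
  define t where "t = ln x / K"
  have t0: "t > 0" unfolding t_def using x2 K by simp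
  have "exp t \<ge> 1 + t" by (rule exp_ge_add_one_self)
  then have "exp (-t) \<le> 1 / (1 + t)" using t0 by (simp add: exp_minus field_simps)
  then have B: "1 - exp (-t) \<ge> t / (1 + t)" using t0 by (simp add: field_simps)
  have "(x - 1) * t > 1" unfolding t_def using A xK K x2
    by (simp add: field_simps)
  then have C: "x * (t / (1 + t)) > 1" using t0 by (simp add: field_simps)
  have "x powr (1 - 1/K) = x * exp (-t)"
    using x0 by (simp add: powr_def t_def algebra_simps exp_diff exp_minus field_simps)
  then have "x - x powr (1 - 1/K) = x * (1 - exp (-t))" by (simp add: algebra_simps)
  also have "\<dots> \<ge> x * (t / (1 + t))" using B x0 by (intro mult_left_mono) auto
  finally show ?thesis using C by linarith
qed


theorem lemma6p2:
  fixes s :: nat and n :: "nat \<Rightarrow> nat" and x0 :: real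
  assumes hs: "s \<ge> 1"
    and hn0: "2 \<le> n 0"
    and hmono: "\<And>i. i < s \<Longrightarrow> n i \<le> n (Suc i)"
    and hx0: "x0 \<ge> 1"
    and hroot: "real s * x0 - 1
        - (\<Sum>j<s. x0 powr ((k n s j - 1) / k n s j)) = 0"
  shows "(real s + 1) / real s \<le> x0 \<and> x0 < max (k n s 0) (exp 1 + 2)"
proof -
  define K where "K = k n s 0"
  have m0: "n 0 \<le> n j" and ms: "n j \<le> n s" if "j \<le> s" for j
    using mono_aux[of s n 0 j, OF hmono] mono_aux[of s n j "s - j", OF hmono] that by auto
  have l0: "log 2 (real (n 0)) > 0" using hn0 by simp
  have kb: "1 \<le> k n s j \<and> k n s j \<le> K" if "j \<le> s" for j
  proof -
    have a: "log 2 (real (n 0)) \<le> log 2 (real (n j))" using m0[OF that] hn0 by simp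
    have b: "log 2 (real (n j)) \<le> log 2 (real (n s))" using ms[OF that] m0[OF that] hn0 by simp
    have pj: "log 2 (real (n j)) > 0" using a l0 by linarith
    have "1 \<le> k n s j" unfolding k_def using b pj by simp
    moreover have "k n s j \<le> K" unfolding K_def k_def
      using a b pj l0 by (intro divide_left_mono) auto
    ultimately show ?thesis by simp
  qed
  have K1: "K \<ge> 1" using kb[of 0] by simp
  have ex: "(k n s j - 1) / k n s j = 1 - 1 / k n s j" if "j \<le> s" for j
    using kb[OF that] by (simp add: field_simps)
  have lo: "x0 powr ((k n s j - 1) / k n s j) \<ge> 1" if "j < s" for j
    using kb[of j] that hx0 ex[of j] by (intro ge_one_powr_ge_zero) auto
  have hi: "x0 powr ((k n s j - 1) / k n s j) \<le> x0 powr (1 - 1/K)" if "j < s" for j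
  proof -
    have "1 / K \<le> 1 / k n s j" using kb[of j] that by (intro divide_left_mono) auto
    then show ?thesis using ex[of j] that hx0 by (intro powr_mono) auto
  qed
  have S1: "(\<Sum>j<s. x0 powr ((k n s j - 1) / k n s j)) \<ge> real s"
    using sum_mono[of "{..<s}" "\<lambda>_. 1", OF lo] by simp
  have S2: "(\<Sum>j<s. x0 powr ((k n s j - 1) / k n s j)) \<le> real s * x0 powr (1 - 1/K)"
    using sum_mono[of "{..<s}" _ "\<lambda>_. x0 powr (1 - 1/K)", OF hi] by simp
  have sp: "real s > 0" using hs by simp
  have "real s * x0 \<ge> real s + 1" using S1 hroot by linarith
  then have P1: "(real s + 1) / real s \<le> x0" using sp by (simp add: field_simps)
  have "real s * (x0 - x0 powr (1 - 1/K)) \<le> 1" using S2 hroot by (simp add: algebra_simps)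
  moreover have "real s * (x0 - x0 powr (1 - 1/K)) \<ge> 1 * (x0 - x0 powr (1 - 1/K))"
    if "x0 - x0 powr (1 - 1/K) \<ge> 0" using that hs by (intro mult_right_mono) auto
  ultimately have D: "x0 - x0 powr (1 - 1/K) \<le> 1" by force
  have P2: "x0 < max K (exp 1 + 2)"
  proof (rule ccontr)
    assume "\<not> ?thesis"
    then have "x0 \<ge> K" "x0 \<ge> exp 1 + 2" by auto
    from key_ineq[OF K1 this] D show False by linarith
  qed
  show ?thesis using P1 P2 K_def by simp
qed

end
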